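(* Let $(\mathsf L,\mathsf R,\Delta)$ be an n.w.f.s. on $\mathcal{C}$, let $(f,s)\colon X\to Y$ and $(g,t)\colon Y\to Z$ be $\mathsf L$-maps, and let $(gf,u)$ be their composite, where $u=\pi_{gf}\circ E(E(1_X,g),1_Z)\circ E(s,1_Z)\circ t$. Then $(1_X,g)\colon f\to gf$ is a morphism of $\mathsf L$-maps $(f,s)\to(gf,u)$.
   Context: An n.w.f.s. is a functorial factorisation $(E,\lambda,\rho)$ ($E\colon\mathcal{C}^{\mathbf 2}\to\mathcal{C}$ on the arrow category, natural $\lambda\colon\mathrm{dom}\Rightarrow E$, $\rho\colon E\Rightarrow\mathrm{cod}$, $\rho_f\lambda_f=f$) with natural $\sigma_f\colon Ef\to E(\lambda_f)$, $\pi_f\colon E(\rho_f)\to Ef$ satisfying $\sigma_f\lambda_f=\lambda_{\lambda_f}$, $\rho_f\pi_f=\rho_{\rho_f}$, $\rho_{\lambda_f}\sigma_f=1$, $\pi_f\lambda_{\rho_f}=1$, $E(1_X,\rho_f)\sigma_f=1$, $\pi_fE(\lambda_f,1_Y)=1$, $E(1_X,\sigma_f)\sigma_f=\sigma_{\lambda_f}\sigma_f$, $\pi_fE(\pi_f,1_Y)=\pi_f\pi_{\rho_f}$, $\sigma_f\pi_f=\pi_{\lambda_f}E(\sigma_f,\pi_f)\sigma_{\rho_f}$. An $\mathsf L$-map is $(f,s)$ with $s\colon Y\to Ef$, $sf=\lambda_f$, $\rho_fs=1_Y$, $\sigma_fs=E(1_X,s)s$; a morphism $(h,k)\colon(f,s)\to(g',t')$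 is a commuting square with $t'k=E(h,k)s$. Here $E(s,1_Z)$ is $E$ applied to the square $(s,1_Z)\colon g\to g\rho_f$ and $E(1_X,g)$ to the square $(1_X,g)\colon f\to gf$. *)

theory Defs
  imports Main
begin

text \<open>A (small, set-based) category: objects, arrows, domain, codomain,
  identities and composition (Comp C g f = g o f).\<close>

record ('o, 'm) cat =
  Obj  :: "'o set"
  Arr  :: "'m set"
  Dom  :: "'m \<Rightarrow> 'o"
  Cod  :: "'m \<Rightarrow> 'o"
  Id   :: "'o \<Rightarrow> 'm"
  Comp :: "'m \<Rightarrow> 'm \<Rightarrow> 'm"

definition hom :: "('o, 'm) cat \<Rightarrow> 'o \<Rightarrow> 'o \<Rightarrow> 'm set" where
  "hom C x y = {f \<in> Arr C. Dom C f = x \<and> Cod C f = y}"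

locale category =
  fixes C :: "('o, 'm) cat"
  assumes dom_obj: "f \<in> Arr C \<Longrightarrow> Dom C f \<in> Obj C"
    and cod_obj: "f \<in> Arr C \<Longrightarrow> Cod C f \<in> Obj C"
    and id_hom: "x \<in> Obj C \<Longrightarrow> Id C x \<in> hom C x x"
    and comp_hom: "f \<in> hom C x y \<Longrightarrow> g \<in> hom C y z \<Longrightarrow> Comp C g f \<in> hom C x z"
    and id_left: "f \<in> Arr C \<Longrightarrow> Comp C (Id C (Cod C f)) f = f"
    and id_right: "f \<in> Arr C \<Longrightarrow> Comp C f (Id C (Dom C f)) = f"
    and assoc: "f \<in> hom C w x \<Longrightarrow> g \<in> hom C x y \<Longrightarrow> h \<in> hom C y z \<Longrightarrow>
                Comp C h (Comp C g f) = Comp C (Comp C h g) f"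

definition sq :: "('o, 'm) cat \<Rightarrow> 'm \<Rightarrow> 'm \<Rightarrow> 'm \<Rightarrow> 'm \<Rightarrow> bool" where
  "sq C f g h k \<longleftrightarrow> f \<in> Arr C \<and> g \<in> Arr C \<and>
     h \<in> hom C (Dom C f) (Dom C g) \<and> k \<in> hom C (Cod C f) (Cod C g) \<and>
     Comp C g h = Comp C k f"

text \<open>E is a functor from the arrow
  category to C: on objects E f, on a square (h,k) : f \<rightarrow> g the arrow
  EM f g h k = E(h,k) : E f \<rightarrow> E g (source and target arrows are explicit).\<close>

locale functorial_factorisation = category C
  for C :: "('o, 'm) cat" +
  fixes E :: "'m \<Rightarrow> 'o"
    and EM :: "'m \<Rightarrow> 'm \<Rightarrow> 'm \<Rightarrow> 'm \<Rightarrow> 'm"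
    and lam :: "'m \<Rightarrow> 'm"
    and rho :: "'m \<Rightarrow> 'm"
  assumes E_obj: "f \<in> Arr C \<Longrightarrow> E f \<in> Obj C"
    and EM_hom: "sq C f g h k \<Longrightarrow> EM f g h k \<in> hom C (E f) (E g)"
    and EM_id: "f \<in> Arr C \<Longrightarrow> EM f f (Id C (Dom C f)) (Id C (Cod C f)) = Id C (E f)"
    and EM_comp: "sq C f g h k \<Longrightarrow> sq C g g' h' k' \<Longrightarrow>
         EM f g' (Comp C h' h) (Comp C k' k) = Comp C (EM g g' h' k') (EM f g h k)"
    and lam_hom: "f \<in> Arr C \<Longrightarrow> lam f \<in> hom C (Dom C f) (E f)"
    and rho_hom: "f \<in> Arr C \<Longrightarrow> rho f \<in> hom C (E f) (Cod C f)"
    and factor: "f \<in> Arr C \<Longrightarrow> Comp C (rho f) (lam f) = f"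
    and lam_nat: "sq C f g h k \<Longrightarrow> Comp C (EM f g h k) (lam f) = Comp C (lam g) h"
    and rho_nat: "sq C f g h k \<Longrightarrow> Comp C k (rho f) = Comp C (rho g) (EM f g h k)"

locale nwfs = functorial_factorisation C E EM lam rho
  for C :: "('o, 'm) cat" and E EM lam rho +
  fixes sig :: "'m \<Rightarrow> 'm"
    and pii :: "'m \<Rightarrow> 'm"
  assumes sig_hom: "f \<in> Arr C \<Longrightarrow> sig f \<in> hom C (E f) (E (lam f))"
    and pii_hom: "f \<in> Arr C \<Longrightarrow> pii f \<in> hom C (E (rho f)) (E f)"
    and sig_nat: "sq C f g h k \<Longrightarrow>
        Comp C (sig g) (EM f g h k) = Comp C (EM (lam f) (lam g) h (EM f g h k)) (sig f)"
    and pii_nat: "sq C f g h k \<Longrightarrow>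
        Comp C (pii g) (EM (rho f) (rho g) (EM f g h k) k) = Comp C (EM f g h k) (pii f)"
    and ax1: "f \<in> Arr C \<Longrightarrow> Comp C (sig f) (lam f) = lam (lam f)"
    and ax2: "f \<in> Arr C \<Longrightarrow> Comp C (rho f) (pii f) = rho (rho f)"
    and ax3: "f \<in> Arr C \<Longrightarrow> Comp C (rho (lam f)) (sig f) = Id C (E f)"
    and ax4: "f \<in> Arr C \<Longrightarrow> Comp C (pii f) (lam (rho f)) = Id C (E f)"
    and ax5: "f \<in> Arr C \<Longrightarrow>
        Comp C (EM (lam f) f (Id C (Dom C f)) (rho f)) (sig f) = Id C (E f)"
    and ax6: "f \<in> Arr C \<Longrightarrow>
        Comp C (pii f) (EM f (rho f) (lam f) (Id C (Cod C f))) = Id C (E f)"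
    and ax7: "f \<in> Arr C \<Longrightarrow>
        Comp C (EM (lam f) (lam (lam f)) (Id C (Dom C f)) (sig f)) (sig f)
          = Comp C (sig (lam f)) (sig f)"
    and ax8: "f \<in> Arr C \<Longrightarrow>
        Comp C (pii f) (EM (rho (rho f)) (rho f) (pii f) (Id C (Cod C f)))
          = Comp C (pii f) (pii (rho f))"
    and ax9: "f \<in> Arr C \<Longrightarrow>
        Comp C (sig f) (pii f)
          = Comp C (pii (lam f))
              (Comp C (EM (lam (rho f)) (rho (lam f)) (sig f) (pii f)) (sig (rho f)))"

definition Lmap :: "('o, 'm) cat \<Rightarrow> ('m \<Rightarrow> 'o) \<Rightarrow> ('m \<Rightarrow> 'm \<Rightarrow> 'm \<Rightarrow> 'm \<Rightarrow> 'm)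
    \<Rightarrow> ('m \<Rightarrow> 'm) \<Rightarrow> ('m \<Rightarrow> 'm) \<Rightarrow> ('m \<Rightarrow> 'm) \<Rightarrow> 'm \<Rightarrow> 'm \<Rightarrow> bool" where
  "Lmap C E EM lam rho sig f s \<longleftrightarrow>
     f \<in> Arr C \<and> s \<in> hom C (Cod C f) (E f) \<and>
     Comp C s f = lam f \<and>
     Comp C (rho f) s = Id C (Cod C f) \<and>
     Comp C (sig f) s = Comp C (EM f (lam f) (Id C (Dom C f)) s) s"

definition Lmap_mor :: "('o, 'm) cat \<Rightarrow> ('m \<Rightarrow> 'm \<Rightarrow> 'm \<Rightarrow> 'm \<Rightarrow> 'm)
    \<Rightarrow> 'm \<Rightarrow> 'm \<Rightarrow> 'm \<Rightarrow> 'm \<Rightarrow> 'm \<Rightarrow> 'm \<Rightarrow> bool" where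
  "Lmap_mor C EM f s g t h k \<longleftrightarrow>
     sq C f g h k \<and> Comp C t k = Comp C (EM f g h k) s"

end

theory Submission
  imports Defs
begin

context nwfs
begin

lemma hom_arr: "a \<in> hom C x y \<Longrightarrow> a \<in> Arr C \<and> Dom C a = x \<and> Cod C a = y"
  by (simp add: hom_def)

lemma main6p16:
  assumes f: "f \<in> hom C X Y" and g: "g \<in> hom C Y Z"
    and s: "s \<in> hom C Y (E f)" and t: "t \<in> hom C Z (E g)"
    and sf: "Comp C (rho f) s = Id C Y"
    and tg: "Comp C t g = lam g"
  shows "Comp C (Comp C (pii (Comp C g f))
               (Comp C (EM (Comp C g (rho f)) (rho (Comp C g f))
                           (EM f (Comp C g f) (Id C X) g) (Id C Z))
                  (Comp C (EM g (Comp C g (rho f)) s (Id C Z)) t))) g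
       = Comp C (EM f (Comp C g f) (Id C X) g) s"
proof -
  have fA: "f \<in> Arr C" "Dom C f = X" "Cod C f = Y" using f by (auto simp: hom_def)
  have gA: "g \<in> Arr C" "Dom C g = Y" "Cod C g = Z" using g by (auto simp: hom_def)
  have X: "X \<in> Obj C" using fA dom_obj by metis
  have Y: "Y \<in> Obj C" using fA cod_obj by metis
  have Z: "Z \<in> Obj C" using gA cod_obj by metis
  have gf: "Comp C g f \<in> hom C X Z" using comp_hom f g by blast
  have gfA: "Comp C g f \<in> Arr C" "Dom C (Comp C g f) = X" "Cod C (Comp C g f) = Z"
    using gf by (auto simp: hom_def)
  have rf: "rho f \<in> hom C (E f) Y" using rho_hom fA by metis
  have grf: "Comp C g (rho f) \<in> hom C (E f) Z" using comp_hom rf g by blast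
  have grfA: "Comp C g (rho f) \<in> Arr C" "Dom C (Comp C g (rho f)) = E f" "Cod C (Comp C g (rho f)) = Z"
    using grf by (auto simp: hom_def)
  have idX: "Id C X \<in> hom C X X" using id_hom X by blast
  have idY: "Id C Y \<in> hom C Y Y" using id_hom Y by blast
  have idZ: "Id C Z \<in> hom C Z Z" using id_hom Z by blast
  have sq1: "sq C f (Comp C g f) (Id C X) g"
  proof -
    have "Comp C (Comp C g f) (Id C X) = Comp C g f" using id_right gfA by metis
    then show ?thesis unfolding sq_def using fA gfA idX g by simp
  qed
  define E1g where "E1g = EM f (Comp C g f) (Id C X) g"
  have E1g: "E1g \<in> hom C (E f) (E (Comp C g f))" using EM_hom sq1 E1g_def by blast
  have rgf: "rho (Comp C g f) \<in> hom C (E (Comp C g f)) Z" using rho_hom gfA by metis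
  have rhonat: "Comp C g (rho f) = Comp C (rho (Comp C g f)) E1g"
    using rho_nat[OF sq1] E1g_def by simp
  have sq2: "sq C g (Comp C g (rho f)) s (Id C Z)"
  proof -
    have "Comp C (Comp C g (rho f)) s = Comp C g (Comp C (rho f) s)"
      using assoc[OF s rf g] by simp
    also have "\<dots> = g" using sf id_right gA by metis
    also have "\<dots> = Comp C (Id C Z) g" using id_left gA by metis
    finally show ?thesis unfolding sq_def using gA grfA s idZ by (simp add: hom_def)
  qed
  have sq3: "sq C (Comp C g (rho f)) (rho (Comp C g f)) E1g (Id C Z)"
  proof -
    have "Comp C (Id C Z) (Comp C g (rho f)) = Comp C g (rho f)" using id_left grfA by metis
    then show ?thesis unfolding sq_def using grfA rgf E1g idZ rhonat by (simp add: hom_def)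
  qed
  define Es where "Es = EM g (Comp C g (rho f)) s (Id C Z)"
  define EE where "EE = EM (Comp C g (rho f)) (rho (Comp C g f)) E1g (Id C Z)"
  have Es: "Es \<in> hom C (E g) (E (Comp C g (rho f)))" using EM_hom sq2 Es_def by blast
  have EE: "EE \<in> hom C (E (Comp C g (rho f))) (E (rho (Comp C g f)))" using EM_hom sq3 EE_def by blast
  have pi: "pii (Comp C g f) \<in> hom C (E (rho (Comp C g f))) (E (Comp C g f))" using pii_hom gfA by metis
  have lg: "lam g \<in> hom C Y (E g)" using lam_hom gA by metis
  have l2: "lam (Comp C g (rho f)) \<in> hom C (E f) (E (Comp C g (rho f)))" using lam_hom grfA by metis
  have rgfA: "rho (Comp C g f) \<in> Arr C" "Dom C (rho (Comp C g f)) = E (Comp C g f)"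
    using rgf by (auto simp: hom_def)
  have l3: "lam (rho (Comp C g f)) \<in> hom C (E (Comp C g f)) (E (rho (Comp C g f)))"
    using lam_hom rgfA by metis
  have n1: "Comp C Es (lam g) = Comp C (lam (Comp C g (rho f))) s"
    using lam_nat[OF sq2] Es_def by simp
  have n2: "Comp C EE (lam (Comp C g (rho f))) = Comp C (lam (rho (Comp C g f))) E1g"
    using lam_nat[OF sq3] EE_def by simp
  have a4: "Comp C (pii (Comp C g f)) (lam (rho (Comp C g f))) = Id C (E (Comp C g f))"
    using ax4 gfA by metis
  have Es_t: "Comp C Es t \<in> hom C Z (E (Comp C g (rho f)))" using comp_hom t Es by blast
  have EEEs: "Comp C EE (Comp C Es t) \<in> hom C Z (E (rho (Comp C g f)))" using comp_hom Es_t EE by blast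
  have "Comp C (Comp C (pii (Comp C g f)) (Comp C EE (Comp C Es t))) g
      = Comp C (pii (Comp C g f)) (Comp C (Comp C EE (Comp C Es t)) g)"
    using assoc[OF g EEEs pi] by simp
  also have "Comp C (Comp C EE (Comp C Es t)) g = Comp C EE (Comp C (Comp C Es t) g)"
    using assoc[OF g Es_t EE] by simp
  also have "Comp C (Comp C Es t) g = Comp C Es (lam g)"
    using assoc[OF g t Es] tg by simp
  also have "\<dots> = Comp C (lam (Comp C g (rho f))) s" by (rule n1)
  also have "Comp C EE (Comp C (lam (Comp C g (rho f))) s) = Comp C (lam (rho (Comp C g f))) (Comp C E1g s)"
    using assoc[OF s l2 EE] n2 assoc[OF s E1g l3] by simp
  also have "Comp C (pii (Comp C g f)) (Comp C (lam (rho (Comp C g f))) (Comp C E1g s))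
      = Comp C (Id C (E (Comp C g f))) (Comp C E1g s)"
    using assoc[OF comp_hom[OF s E1g] l3 pi] a4 by simp
  also have "\<dots> = Comp C E1g s"
  proof -
    have "Comp C E1g s \<in> hom C Y (E (Comp C g f))" using comp_hom s E1g by blast
    then show ?thesis using id_left by (metis hom_arr)
  qed
  finally show ?thesis unfolding E1g_def EE_def Es_def .
qed

end

theorem lemma6p16:
  fixes C :: "('o, 'm) cat"
  assumes "nwfs C E EM lam rho sig pii"
    and "Lmap C E EM lam rho sig f s"
    and "Lmap C E EM lam rho sig g t"
    and "Cod C f = Dom C g"
    and "u = Comp C (pii (Comp C g f))
               (Comp C (EM (Comp C g (rho f)) (rho (Comp C g f))
                           (EM f (Comp C g f) (Id C (Dom C f)) g) (Id C (Cod C g)))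
                  (Comp C (EM g (Comp C g (rho f)) s (Id C (Cod C g))) t))"
  shows "Lmap_mor C EM f s (Comp C g f) u (Id C (Dom C f)) g"
proof -
  interpret nwfs C E EM lam rho sig pii by (rule assms(1))
  have f: "f \<in> hom C (Dom C f) (Cod C f)" and g: "g \<in> hom C (Cod C f) (Cod C g)"
    using assms(2,3,4) by (auto simp: Lmap_def hom_def)
  have s: "s \<in> hom C (Cod C f) (E f)" and sf: "Comp C (rho f) s = Id C (Cod C f)"
    using assms(2) by (auto simp: Lmap_def)
  have t: "t \<in> hom C (Cod C g) (E g)" and tg: "Comp C t g = lam g"
    using assms(3) by (auto simp: Lmap_def)
  have fA: "f \<in> Arr C" using f by (simp add: hom_def)
  have X: "Dom C f \<in> Obj C" using dom_obj fA by blast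
  have gf: "Comp C g f \<in> hom C (Dom C f) (Cod C g)" using comp_hom f g by blast
  have sq1: "sq C f (Comp C g f) (Id C (Dom C f)) g"
  proof -
    have "Comp C (Comp C g f) (Id C (Dom C f)) = Comp C g f" using id_right gf by (metis hom_arr)
    then show ?thesis unfolding sq_def using f gf id_hom[OF X] g by (simp add: hom_def)
  qed
  show ?thesis unfolding Lmap_mor_def
    using sq1 main6p16[OF f g s t sf tg] assms(5) by simp
qed

end
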